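(* Fix a finite extensive-form game with perfect recall and any sequence of joint normal-form plans $\pi^1,\dots,\pi^T\in\Pi$. Then the empirical frequency of play $\bar\mu^T$ satisfies \[ \delta(\bar\mu^T)=\max_{i\in\mathcal P}\ \max_{\sigma=(I,a)\in\Sigma_i\setminus\{\varnothing_i\}}\frac{R^T_\sigma}{T}. \] Consequently, $\bar\mu^T$ is an $\epsilon$-EFCE with $\epsilon=\max_{i\in\mathcal P}\max_{\sigma}R^T_\sigma/T$. That is, for every player $i$, every $\sigma=(I,a)$ and every $\hat\mu_i\in\Delta_{\Pi_i(I)}$, \[ \sum_{z\in Z(I,a)}q_{\bar\mu^T}(z)u_i(z)\ \ge\ \sum_{z\in Z(I)}p^\sigma_{\bar\mu^T,\hat\mu_i}(z)u_i(z)-\epsilon . \]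
   Context: Setting: a finite extensive-form game (game tree) with a set of players $\mathcal P$ and a chance player $c$ with fixed known action probabilities. $Z$ is the set of terminal nodes (leaves), $u_i:Z\to\mathbb R$ is player $i$'s payoff, and $p_c(z)$ is the product of chance probabilities along the root-to-$z$ path. $\mathcal I_i$ is the set of information sets (infosets) of player $i\in\mathcal P$; $A(I)$ is the action set at $I$. The game has perfect recall: all nodes of an infoset $I\in\mathcal I_i$ have the same ordered list of player-$i$ (infoset, action) pairs on their root paths. For $I,J\in\mathcal I_i$, write $I\preceq J$ if some path in the tree goes from a node of $I$ to a node of $J$ (with $I\preceq I$). A normal-form plan is $\pi_i\in\Pi_i=\prod_{I\in\mathcal I_i}A(I)$. Write $\Pi=\prod_{i\in\mathcal P}\Pi_i$ and $\Pi_{-i}=\prod_{j\ne i}\Pi_j$. The sequences of player $i$ are $\Sigma_i=\{(I,a):I\in\mathcal I_i,a\in A(I)\}\cup\{\varnothing_i\}$. $\Pi_i(I)$ is the set of plans $\pi_i$ with $\pi_i(J)=b$ for every player-$i$ pair $(J,b)$ on the root path to $I$. Also $\Pi_i((I,a))=\{\pi_i\in\Pi_i(I):\pi_i(I)=a\}$ and $\Pi_i(\varnothing_i)=\Pi_i$. For $z\in Z$, $\Pi_i(z)$ is the set of plans choosing, at every player-$i$ infoset visited on the root path to $z$, the action taken on that path. Then $\Pi(z)=\prod_i\Pi_i(z)$ and $\Pi_{-i}(z)=\prod_{j\neq i}\Pi_j(z)$. $Z(I)$ is the set of terminal nodes below nodes of $I$; $Z(I,a)\subseteq Z(I)$ consists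 of those whose path takes $a$ at $I$. $\mathcal C(I,a)$ is the set of player-$i$ infosets reachable from a node of $I$ by a path starting with $a$ and not passing through another player-$i$ infoset. Immediate utilities at round $t$: $u_i^t[I,a]=\sum_{z\in Z(I,a)\setminus\bigcup_{J\in\mathcal C(I,a)}Z(J)}\mathbb 1[\pi^t_{-i}\in\Pi_{-i}(z)]\,p_c(z)u_i(z)$. Values: $V_I^t(\pi_i)=u_i^t[I,\pi_i(I)]+\sum_{J\in\mathcal C(I,\pi_i(I))}V_J^t(\pi_i)$, defined recursively. Trigger regret for $\sigma=(I,a)$: $R^T_\sigma=\max_{\hat\pi_i\in\Pi_i(I)}\sum_{t=1}^T\mathbb 1[\pi_i^t\in\Pi_i(\sigma)]\big(V_I^t(\hat\pi_i)-V_I^t(\pi_i^t)\big)$. Empirical frequency: $\bar\mu^T(\pi)=|\{t\le T:\pi^t=\pi\}|/T$. For $\mu\in\Delta_\Pi$, $\sigma=(I,a)$, $\hat\mu_i\in\Delta_{\Pi_i(I)}$, $z\in Z(I)$: \[ p^\sigma_{\mu,\hat\mu_i}(z)=\Big(\sum_{\pi_i\in\Pi_i(\sigma),\,\pi_{-i}\in\Pi_{-i}(z)}\mu(\pi_i,\pi_{-i})\Big)\Big(\sum_{\hat\pi_i\in\Pi_i(z)}\hat\mu_i(\hat\pi_i)\Big)p_c(z), \] and $q_\mu(z)=\big(\sum_{\pi\in\Pi(z)}\mu(\pi)\big)p_c(z)$. Maximum deviation: \[ \delta(\mu)=\max_{i\in\mathcal P}\max_{\sigma=(I,a)}\Big\{\max_{\hat\mu_i\in\Delta_{\Pi_i(I)}}\sum_{z\in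 Z(I)}p^\sigma_{\mu,\hat\mu_i}(z)u_i(z)-\sum_{z\in Z(I,a)}q_\mu(z)u_i(z)\Big\}. \] An EFCE is a $\mu$ with $\delta(\mu)\le 0$; an $\epsilon$-EFCE is a $\mu$ with $\delta(\mu)\le\epsilon$. *)

theory Defs
  imports "HOL-Library.FuncSet" Complex_Main
begin

text \<open>A game: a finite prefix-closed set of histories (the tree; the root is the
empty history), a set of players, the player to move at each non-terminal history
(None = chance), chance probabilities, an infoset label for each node, and payoffs.\<close>

record ('p, 'a, 'i) efg =
  hists   :: "'a list set"
  players :: "'p set"
  turn    :: "'a list \<Rightarrow> 'p option"
  chance  :: "'a list \<Rightarrow> 'a \<Rightarrow> real"
  infoset :: "'a list \<Rightarrow> 'i"
  util    :: "'p \<Rightarrow> 'a list \<Rightarrow> real"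

definition acts :: "('p,'a,'i) efg \<Rightarrow> 'a list \<Rightarrow> 'a set" where
  "acts G h = {a. h @ [a] \<in> hists G}"

definition terminals :: "('p,'a,'i) efg \<Rightarrow> 'a list set" where
  "terminals G = {z \<in> hists G. acts G z = {}}"

definition pnode :: "('p,'a,'i) efg \<Rightarrow> 'p \<Rightarrow> 'a list \<Rightarrow> bool" where
  "pnode G i h \<longleftrightarrow> h \<in> hists G \<and> acts G h \<noteq> {} \<and> turn G h = Some i"

definition cnode :: "('p,'a,'i) efg \<Rightarrow> 'a list \<Rightarrow> bool" where
  "cnode G h \<longleftrightarrow> h \<in> hists G \<and> acts G h \<noteq> {} \<and> turn G h = None"

definition infosets :: "('p,'a,'i) efg \<Rightarrow> 'p \<Rightarrow> 'i set" where
  "infosets G i = infoset G ` {h. pnode G i h}"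

definition inodes :: "('p,'a,'i) efg \<Rightarrow> 'p \<Rightarrow> 'i \<Rightarrow> 'a list set" where
  "inodes G i I = {h. pnode G i h \<and> infoset G h = I}"

definition iacts :: "('p,'a,'i) efg \<Rightarrow> 'p \<Rightarrow> 'i \<Rightarrow> 'a set" where
  "iacts G i I = (\<Union>h\<in>inodes G i I. acts G h)"

definition seqs :: "('p,'a,'i) efg \<Rightarrow> 'p \<Rightarrow> 'a list \<Rightarrow> ('i \<times> 'a) list" where
  "seqs G i h = [(infoset G (take k h), h ! k). k \<leftarrow> [0..<length h], turn G (take k h) = Some i]"

definition wf_efg :: "('p,'a,'i) efg \<Rightarrow> bool" where
  "wf_efg G \<longleftrightarrow>
     finite (hists G) \<and> [] \<in> hists G \<and>
     (\<forall>h a. h @ [a] \<in> hists G \<longrightarrow> h \<in> hists G) \<and>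
     finite (players G) \<and>
     (\<forall>i h. pnode G i h \<longrightarrow> i \<in> players G) \<and>
     (\<forall>h. cnode G h \<longrightarrow> (\<forall>a\<in>acts G h. 0 \<le> chance G h a) \<and> (\<Sum>a\<in>acts G h. chance G h a) = 1) \<and>
     (\<forall>i j h h'. pnode G i h \<and> pnode G j h' \<and> infoset G h = infoset G h'
        \<longrightarrow> i = j \<and> acts G h = acts G h') \<and>
     (\<forall>i h h'. pnode G i h \<and> pnode G i h' \<and> infoset G h = infoset G h'
        \<longrightarrow> seqs G i h = seqs G i h')"

definition plans :: "('p,'a,'i) efg \<Rightarrow> 'p \<Rightarrow> ('i \<Rightarrow> 'a) set" where
  "plans G i = (\<Pi>\<^sub>E I\<in>infosets G i. iacts G i I)"

definition plans_z :: "('p,'a,'i) efg \<Rightarrow> 'p \<Rightarrow> 'a list \<Rightarrow> ('i \<Rightarrow> 'a) set" where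
  "plans_z G i z = {\<pi> \<in> plans G i. \<forall>(J, b)\<in>set (seqs G i z). \<pi> J = b}"

definition plans_I :: "('p,'a,'i) efg \<Rightarrow> 'p \<Rightarrow> 'i \<Rightarrow> ('i \<Rightarrow> 'a) set" where
  "plans_I G i I = {\<pi> \<in> plans G i. \<forall>h\<in>inodes G i I. \<forall>(J, b)\<in>set (seqs G i h). \<pi> J = b}"

definition plans_seq :: "('p,'a,'i) efg \<Rightarrow> 'p \<Rightarrow> 'i \<Rightarrow> 'a \<Rightarrow> ('i \<Rightarrow> 'a) set" where
  "plans_seq G i I a = {\<pi> \<in> plans_I G i I. \<pi> I = a}"

definition jplans :: "('p,'a,'i) efg \<Rightarrow> ('p \<Rightarrow> 'i \<Rightarrow> 'a) set" where
  "jplans G = (\<Pi>\<^sub>E i\<in>players G. plans G i)"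

definition jplans_z :: "('p,'a,'i) efg \<Rightarrow> 'a list \<Rightarrow> ('p \<Rightarrow> 'i \<Rightarrow> 'a) set" where
  "jplans_z G z = {\<pi> \<in> jplans G. \<forall>i\<in>players G. \<pi> i \<in> plans_z G i z}"

definition others_reach :: "('p,'a,'i) efg \<Rightarrow> 'p \<Rightarrow> ('p \<Rightarrow> 'i \<Rightarrow> 'a) \<Rightarrow> 'a list \<Rightarrow> bool" where
  "others_reach G i \<pi> z \<longleftrightarrow> (\<forall>j\<in>players G - {i}. \<pi> j \<in> plans_z G j z)"

definition pc :: "('p,'a,'i) efg \<Rightarrow> 'a list \<Rightarrow> real" where
  "pc G z = (\<Prod>k\<in>{k. k < length z \<and> turn G (take k z) = None}. chance G (take k z) (z ! k))"

definition below :: "('p,'a,'i) efg \<Rightarrow> 'p \<Rightarrow> 'i \<Rightarrow> 'a list set" where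
  "below G i I = {z \<in> terminals G. \<exists>h\<in>inodes G i I. \<exists>w. z = h @ w}"

definition below_act :: "('p,'a,'i) efg \<Rightarrow> 'p \<Rightarrow> 'i \<Rightarrow> 'a \<Rightarrow> 'a list set" where
  "below_act G i I a = {z \<in> terminals G. \<exists>h\<in>inodes G i I. \<exists>w. z = h @ a # w}"

definition children :: "('p,'a,'i) efg \<Rightarrow> 'p \<Rightarrow> 'i \<Rightarrow> 'a \<Rightarrow> 'i set" where
  "children G i I a = {J. \<exists>h\<in>inodes G i I. \<exists>w.
      pnode G i (h @ a # w) \<and> infoset G (h @ a # w) = J \<and>
      (\<forall>k<length w. \<not> pnode G i (h @ a # take k w))}"

definition imm :: "('p,'a,'i) efg \<Rightarrow> 'p \<Rightarrow> ('p \<Rightarrow> 'i \<Rightarrow> 'a) \<Rightarrow> 'i \<Rightarrow> 'a \<Rightarrow> real" where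
  "imm G i \<pi> I a =
     (\<Sum>z \<in> below_act G i I a - (\<Union>J\<in>children G i I a. below G i J).
        (if others_reach G i \<pi> z then pc G z * util G i z else 0))"

text \<open>Recursive values with fuel; the recursion depth is bounded by the tree depth.\<close>
fun Vf :: "nat \<Rightarrow> ('p,'a,'i) efg \<Rightarrow> 'p \<Rightarrow> ('p \<Rightarrow> 'i \<Rightarrow> 'a) \<Rightarrow> ('i \<Rightarrow> 'a) \<Rightarrow> 'i \<Rightarrow> real" where
  "Vf 0 G i \<pi> \<rho> I = 0"
| "Vf (Suc n) G i \<pi> \<rho> I = imm G i \<pi> I (\<rho> I) + (\<Sum>J\<in>children G i I (\<rho> I). Vf n G i \<pi> \<rho> J)"

definition V :: "('p,'a,'i) efg \<Rightarrow> 'p \<Rightarrow> ('p \<Rightarrow> 'i \<Rightarrow> 'a) \<Rightarrow> ('i \<Rightarrow> 'a) \<Rightarrow> 'i \<Rightarrow> real" where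
  "V G i \<pi> \<rho> I = Vf (card (hists G) + 1) G i \<pi> \<rho> I"

definition trig_regret :: "('p,'a,'i) efg \<Rightarrow> 'p \<Rightarrow> 'i \<Rightarrow> 'a \<Rightarrow> nat \<Rightarrow> (nat \<Rightarrow> 'p \<Rightarrow> 'i \<Rightarrow> 'a) \<Rightarrow> real" where
  "trig_regret G i I a T pis =
     Max ((\<lambda>\<rho>. \<Sum>t\<in>{1..T}. if pis t i \<in> plans_seq G i I a
                             then V G i (pis t) \<rho> I - V G i (pis t) (pis t i) I else 0)
          ` plans_I G i I)"

definition mubar :: "nat \<Rightarrow> (nat \<Rightarrow> 'p \<Rightarrow> 'i \<Rightarrow> 'a) \<Rightarrow> ('p \<Rightarrow> 'i \<Rightarrow> 'a) \<Rightarrow> real" where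
  "mubar T pis \<pi> = real (card {t \<in> {1..T}. pis t = \<pi>}) / real T"

definition dist_on :: "'x set \<Rightarrow> ('x \<Rightarrow> real) \<Rightarrow> bool" where
  "dist_on S m \<longleftrightarrow> (\<forall>x. 0 \<le> m x) \<and> (\<forall>x. x \<notin> S \<longrightarrow> m x = 0) \<and> (\<Sum>x\<in>S. m x) = 1"

definition p_dev :: "('p,'a,'i) efg \<Rightarrow> 'p \<Rightarrow> 'i \<Rightarrow> 'a \<Rightarrow> (('p \<Rightarrow> 'i \<Rightarrow> 'a) \<Rightarrow> real)
                     \<Rightarrow> (('i \<Rightarrow> 'a) \<Rightarrow> real) \<Rightarrow> 'a list \<Rightarrow> real" where
  "p_dev G i I a \<mu> \<mu>h z =
     (\<Sum>\<pi>\<in>{\<pi> \<in> jplans G. \<pi> i \<in> plans_seq G i I a \<and> others_reach G i \<pi> z}. \<mu> \<pi>)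
     * (\<Sum>\<rho>\<in>plans_z G i z. \<mu>h \<rho>) * pc G z"

definition q :: "('p,'a,'i) efg \<Rightarrow> (('p \<Rightarrow> 'i \<Rightarrow> 'a) \<Rightarrow> real) \<Rightarrow> 'a list \<Rightarrow> real" where
  "q G \<mu> z = (\<Sum>\<pi>\<in>jplans_z G z. \<mu> \<pi>) * pc G z"

text \<open>All triples (i, I, a) with \<sigma> = (I,a) \<in> \<Sigma>_i minus the empty sequence.\<close>
definition seqset :: "('p,'a,'i) efg \<Rightarrow> ('p \<times> 'i \<times> 'a) set" where
  "seqset G = {(i, I, a). i \<in> players G \<and> I \<in> infosets G i \<and> a \<in> iacts G i I}"

definition dev :: "('p,'a,'i) efg \<Rightarrow> (('p \<Rightarrow> 'i \<Rightarrow> 'a) \<Rightarrow> real) \<Rightarrow> 'p \<Rightarrow> 'i \<Rightarrow> 'a \<Rightarrow> real" where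
  "dev G \<mu> i I a =
     Sup {(\<Sum>z\<in>below G i I. p_dev G i I a \<mu> \<mu>h z * util G i z) | \<mu>h. dist_on (plans_I G i I) \<mu>h}
     - (\<Sum>z\<in>below_act G i I a. q G \<mu> z * util G i z)"

definition delta :: "('p,'a,'i) efg \<Rightarrow> (('p \<Rightarrow> 'i \<Rightarrow> 'a) \<Rightarrow> real) \<Rightarrow> real" where
  "delta G \<mu> = Max ((\<lambda>(i, I, a). dev G \<mu> i I a) ` seqset G)"

definition efce_eps :: "('p,'a,'i) efg \<Rightarrow> (('p \<Rightarrow> 'i \<Rightarrow> 'a) \<Rightarrow> real) \<Rightarrow> real \<Rightarrow> bool" where
  "efce_eps G \<mu> \<epsilon> \<longleftrightarrow> delta G \<mu> \<le> \<epsilon>"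

end

theory Submission
  imports Defs
begin


lemma seqs_snoc: "seqs G i (h @ [b]) = seqs G i h @ (if turn G h = Some i then [(infoset G h, b)] else [])"
proof -
  have t: "k \<in> set [0..<length h] \<Longrightarrow> take k (h @ [b]) = take k h \<and> (h @ [b]) ! k = h ! k" for k
    by (simp add: nth_append)
  have "map (\<lambda>k. if turn G (take k (h@[b])) = Some i then [(infoset G (take k (h@[b])), (h@[b]) ! k)] else []) [0..<length h]
      = map (\<lambda>k. if turn G (take k h) = Some i then [(infoset G (take k h), h ! k)] else []) [0..<length h]"
    by (rule map_cong[OF refl]) (simp only: t)
  moreover have "take (length h) (h @ [b]) = h" "(h @ [b]) ! length h = b" by simp_all
  ultimately show ?thesis unfolding seqs_def by (simp del: take_append map_eq_conv)
qed

lemma seqs_mem_iff: "(J, b) \<in> set (seqs G i z) \<longleftrightarrow> (\<exists>p w. z = p @ b # w \<and> turn G p = Some i \<and> infoset G p = J)"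
proof (induction z rule: rev_induct)
  case Nil
  then show ?case by (simp add: seqs_def)
next
  case (snoc c z)
  have eq: "(z @ [c] = p @ b # w) \<longleftrightarrow> (w = [] \<and> p = z \<and> b = c) \<or> (\<exists>w'. w = w' @ [c] \<and> z = p @ b # w')" for p w
    by (cases w rule: rev_exhaust) auto
  show ?case unfolding seqs_snoc using snoc eq by auto
qed

lemma hists_prefix: assumes "wf_efg G" "h @ w \<in> hists G" shows "h \<in> hists G"
  using assms(2)
proof (induction w rule: rev_induct)
  case Nil then show ?case by simp
next
  case (snoc x xs) then show ?case using assms(1) unfolding wf_efg_def
    by (metis append_assoc)
qed

lemma fin_hists: "wf_efg G \<Longrightarrow> finite (hists G)" by (simp add: wf_efg_def)

lemma len_lt_card: assumes "wf_efg G" "h \<in> hists G" shows "length h < card (hists G)"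
proof -
  have sub: "(\<lambda>k. take k h) ` {0..length h} \<subseteq> hists G"
  proof
    fix x assume "x \<in> (\<lambda>k. take k h) ` {0..length h}"
    then obtain k where "x = take k h" by auto
    then show "x \<in> hists G" using hists_prefix[OF assms(1), of "take k h" "drop k h"] assms(2) by simp
  qed
  have "inj_on (\<lambda>k. take k h) {0..length h}"
    by (rule inj_onI) (metis atLeastAtMost_iff length_take min.absorb2)
  then have "card ((\<lambda>k. take k h) ` {0..length h}) = Suc (length h)"
    by (simp add: card_image)
  moreover have "card ((\<lambda>k. take k h) ` {0..length h}) \<le> card (hists G)"
    by (rule card_mono[OF fin_hists[OF assms(1)] sub])
  ultimately show ?thesis by simp
qed

lemma seqs_prefix: "\<exists>r. seqs G i (h @ w) = seqs G i h @ r"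
proof (induction w rule: rev_induct)
  case Nil then show ?case by simp
next
  case (snoc x xs)
  then obtain r where "seqs G i (h @ xs) = seqs G i h @ r" by blast
  then show ?case using seqs_snoc[of G i "h @ xs" x] by (metis append_assoc)
qed

lemma seqs_step: assumes "turn G h = Some i" shows "\<exists>r. seqs G i (h @ b # w) = seqs G i h @ (infoset G h, b) # r"
proof -
  obtain r where "seqs G i ((h @ [b]) @ w) = seqs G i (h @ [b]) @ r" using seqs_prefix[of G i "h @ [b]" w] by blast
  then show ?thesis using seqs_snoc[of G i h b] assms by auto
qed

lemma pnode_prefix: assumes "wf_efg G" "h @ b # w \<in> hists G" "turn G h = Some i" shows "pnode G i h"
proof -
  have "(h @ [b]) @ w \<in> hists G" using assms(2) by simp
  then have "h @ [b] \<in> hists G" using hists_prefix[OF assms(1)] by blast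
  then show ?thesis using hists_prefix[OF assms(1)] assms(3) unfolding pnode_def acts_def by blast
qed

lemma pr_seqs: assumes "wf_efg G" "h \<in> inodes G i I" "h' \<in> inodes G i I" shows "seqs G i h = seqs G i h'"
proof -
  have "\<forall>i h h'. pnode G i h \<and> pnode G i h' \<and> infoset G h = infoset G h' \<longrightarrow> seqs G i h = seqs G i h'"
    using assms(1) unfolding wf_efg_def by blast
  then show ?thesis using assms(2,3) unfolding inodes_def by auto
qed

lemma inode_pnode: "h \<in> inodes G i I \<Longrightarrow> pnode G i h \<and> infoset G h = I"
  unfolding inodes_def by blast

lemma nonnested: assumes "wf_efg G" "h \<in> inodes G i I" "h @ b # w \<in> inodes G i I" shows False
proof -
  have "turn G h = Some i" using inode_pnode[OF assms(2)] unfolding pnode_def by blast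
  then obtain r where "seqs G i (h @ b # w) = seqs G i h @ (infoset G h, b) # r" using seqs_step[of G h i b w] by blast
  moreover have "seqs G i h = seqs G i (h @ b # w)" using pr_seqs[OF assms] .
  ultimately show False by (metis append_self_conv list.distinct(1))
qed

lemma same_node: assumes "wf_efg G" "h \<in> inodes G i I" "h' \<in> inodes G i I" "h @ w = h' @ w'" shows "h = h'"
proof -
  obtain us where us: "(h = h' @ us \<and> us @ w = w') \<or> (h @ us = h' \<and> w = us @ w')"
    using assms(4) append_eq_append_conv2 by metis
  show ?thesis
  proof (cases us)
    case Nil then show ?thesis using us by simp
  next
    case (Cons c v)
    show ?thesis
    proof (cases "h = h' @ us")
      case True
      then show ?thesis using nonnested[OF assms(1) assms(3), of c v] assms(2) Cons by simp
    next
      case False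
      then have "h @ c # v = h'" using us Cons by simp
      then show ?thesis using nonnested[OF assms(1) assms(2), of c v] assms(3) by simp
    qed
  qed
qed

lemma seqs_to_node: assumes "wf_efg G" "(J, b) \<in> set (seqs G i z)" "z \<in> hists G"
  shows "\<exists>p w. z = p @ b # w \<and> p \<in> inodes G i J"
proof -
  obtain p w where pw: "z = p @ b # w" "turn G p = Some i" "infoset G p = J" using assms(2) unfolding seqs_mem_iff by blast
  have "pnode G i p" using pnode_prefix[OF assms(1), of p b w i] pw assms(3) by simp
  then show ?thesis using pw unfolding inodes_def by blast
qed

lemma fin_acts: assumes "wf_efg G" shows "finite (acts G h)"
proof -
  have "acts G h = (\<lambda>a. h @ [a]) -` hists G" unfolding acts_def by auto
  moreover have "inj (\<lambda>a. h @ [a])" by (rule injI) simp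
  ultimately show ?thesis using finite_vimageI[OF fin_hists[OF assms]] by simp
qed

lemma fin_inodes: "wf_efg G \<Longrightarrow> finite (inodes G i I)"
  by (rule finite_subset[OF _ fin_hists]) (auto simp: inodes_def pnode_def)

lemma fin_iacts: "wf_efg G \<Longrightarrow> finite (iacts G i I)"
  unfolding iacts_def by (intro finite_UN_I fin_inodes fin_acts)

lemma fin_infosets: "wf_efg G \<Longrightarrow> finite (infosets G i)"
  unfolding infosets_def
  by (rule finite_imageI, rule finite_subset[OF _ fin_hists]) (auto simp: pnode_def)

lemma fin_plans: assumes "wf_efg G" shows "finite (plans G i)"
  unfolding plans_def by (rule finite_PiE) (auto simp: fin_infosets[OF assms] fin_iacts[OF assms])

lemma fin_jplans: assumes "wf_efg G" shows "finite (jplans G)"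
proof -
  have "finite (players G)" using assms unfolding wf_efg_def by blast
  then show ?thesis unfolding jplans_def by (rule finite_PiE) (auto simp: fin_plans[OF assms])
qed

lemma fin_children: "wf_efg G \<Longrightarrow> finite (children G i I a)"
  unfolding children_def
  by (rule finite_subset[OF _ finite_imageI[OF fin_hists]]) (auto simp: pnode_def)

lemma fin_below: "wf_efg G \<Longrightarrow> finite (below G i I)"
  unfolding below_def terminals_def by (rule finite_subset[OF _ fin_hists]) auto

lemma fin_below_act: "wf_efg G \<Longrightarrow> finite (below_act G i I a)"
  unfolding below_act_def terminals_def by (rule finite_subset[OF _ fin_hists]) auto

lemma fin_seqset: assumes "wf_efg G" shows "finite (seqset G)"
proof -
  have "seqset G \<subseteq> Sigma (players G) (\<lambda>i. Sigma (infosets G i) (\<lambda>I. iacts G i I))"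
    unfolding seqset_def by auto
  moreover have "finite (players G)" using assms unfolding wf_efg_def by blast
  moreover have "finite (Sigma (players G) (\<lambda>i. Sigma (infosets G i) (\<lambda>I. iacts G i I)))"
    using calculation(2) fin_infosets[OF assms] fin_iacts[OF assms] by (intro finite_SigmaI) auto
  ultimately show ?thesis using finite_subset by blast
qed



lemma below_split: assumes "z \<in> below G i I" shows "\<exists>h b w. h \<in> inodes G i I \<and> z = h @ b # w"
proof -
  obtain h w where hw: "z \<in> terminals G" "h \<in> inodes G i I" "z = h @ w" using assms unfolding below_def by blast
  have "acts G h \<noteq> {}" using hw(2) unfolding inodes_def pnode_def by blast
  moreover have "acts G z = {}" using hw(1) unfolding terminals_def by blast
  ultimately have "w \<noteq> []" using hw(3) by auto
  then show ?thesis using hw by (metis neq_Nil_conv)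
qed

lemma seqs_first: assumes "wf_efg G" "turn G h0 = Some i" "h0 @ a # w0 \<in> hists G"
  "\<forall>k<length w0. \<not> pnode G i (h0 @ a # take k w0)"
  shows "seqs G i (h0 @ a # w0) = seqs G i h0 @ [(infoset G h0, a)]"
  using assms(3,4)
proof (induction w0 rule: rev_induct)
  case Nil
  then show ?case using seqs_snoc[of G i h0 a] assms(2) by simp
next
  case (snoc c w)
  have h1: "h0 @ a # w \<in> hists G" using hists_prefix[OF assms(1), of "h0 @ a # w" "[c]"] snoc.prems(1) by simp
  have h2: "\<forall>k<length w. \<not> pnode G i (h0 @ a # take k w)"
  proof (intro allI impI)
    fix k assume "k < length w"
    then show "\<not> pnode G i (h0 @ a # take k w)" using snoc.prems(2)[rule_format, of k] by simp
  qed
  have "\<not> pnode G i (h0 @ a # w)" using snoc.prems(2)[rule_format, of "length w"] by simp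
  then have "turn G (h0 @ a # w) \<noteq> Some i"
    using pnode_prefix[OF assms(1), of "h0 @ a # w" c "[]" i] snoc.prems(1) by auto
  then show ?case using seqs_snoc[of G i "h0 @ a # w" c] snoc.IH[OF h1 h2] by simp
qed

lemma child_node: assumes "wf_efg G" "J \<in> children G i I a" "g \<in> inodes G i J"
  shows "\<exists>h w. h \<in> inodes G i I \<and> g = h @ a # w \<and> seqs G i g = seqs G i h @ [(I, a)]"
proof -
  obtain h0 w0 where hw: "h0 \<in> inodes G i I" "pnode G i (h0 @ a # w0)" "infoset G (h0 @ a # w0) = J"
    "\<forall>k<length w0. \<not> pnode G i (h0 @ a # take k w0)"
    using assms(2) unfolding children_def by blast
  have t: "turn G h0 = Some i" "infoset G h0 = I" using hw(1) unfolding inodes_def pnode_def by auto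
  have s0: "seqs G i (h0 @ a # w0) = seqs G i h0 @ [(I, a)]"
    using seqs_first[OF assms(1) t(1) _ hw(4)] hw(2) t(2) unfolding pnode_def by simp
  have "h0 @ a # w0 \<in> inodes G i J" using hw(2,3) unfolding inodes_def by simp
  then have sg: "seqs G i g = seqs G i h0 @ [(I, a)]" using pr_seqs[OF assms(1) assms(3)] s0 by simp
  have "g \<in> hists G" using assms(3) unfolding inodes_def pnode_def by blast
  moreover have "(I, a) \<in> set (seqs G i g)" using sg by simp
  ultimately obtain p w where pw: "g = p @ a # w" "p \<in> inodes G i I" using seqs_to_node[OF assms(1)] by blast
  have "seqs G i p = seqs G i h0" using pr_seqs[OF assms(1) pw(2) hw(1)] .
  then show ?thesis using pw sg by auto
qed

lemma child_infoset: "J \<in> children G i I a \<Longrightarrow> J \<in> infosets G i"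
  unfolding children_def infosets_def by blast

lemma two_between: assumes "turn G h = Some i" "turn G (h @ a # w1) = Some i"
  shows "length (seqs G i (h @ a # w1 @ c # w2)) \<ge> length (seqs G i h) + 2"
proof -
  obtain r1 where r1: "seqs G i (h @ a # w1) = seqs G i h @ (infoset G h, a) # r1" using seqs_step[OF assms(1)] by blast
  obtain r2 where r2: "seqs G i ((h @ a # w1) @ c # w2) = seqs G i (h @ a # w1) @ (infoset G (h @ a # w1), c) # r2"
    using seqs_step[OF assms(2)] by blast
  show ?thesis using r1 r2 by simp
qed

lemma below_child_sub: assumes "wf_efg G" "J \<in> children G i I a" "z \<in> below G i J"
  shows "z \<in> below_act G i I a"
proof -
  obtain g v where gv: "z \<in> terminals G" "g \<in> inodes G i J" "z = g @ v" using assms(3) unfolding below_def by blast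
  obtain h w where "h \<in> inodes G i I" "g = h @ a # w" using child_node[OF assms(1,2) gv(2)] by blast
  then show ?thesis using gv unfolding below_act_def by auto
qed

lemma child_disj: assumes "wf_efg G" "J \<in> children G i I a" "J' \<in> children G i I a"
  "z \<in> below G i J" "z \<in> below G i J'" shows "J = J'"
proof -
  obtain g v where gv: "g \<in> inodes G i J" "z = g @ v" using assms(4) unfolding below_def by blast
  obtain g' v' where gv': "g' \<in> inodes G i J'" "z = g' @ v'" using assms(5) unfolding below_def by blast
  obtain h w where hw: "h \<in> inodes G i I" "g = h @ a # w" "seqs G i g = seqs G i h @ [(I, a)]"
    using child_node[OF assms(1,2) gv(1)] by blast
  obtain h' w' where hw': "h' \<in> inodes G i I" "g' = h' @ a # w'" "seqs G i g' = seqs G i h' @ [(I, a)]"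
    using child_node[OF assms(1,3) gv'(1)] by blast
  have "h = h'" using same_node[OF assms(1) hw(1) hw'(1), of "a # w @ v" "a # w' @ v'"] gv gv' hw hw' by simp
  have th: "turn G h = Some i" using hw(1) unfolding inodes_def pnode_def by blast
  have tg: "turn G g = Some i" "turn G g' = Some i" using gv(1) gv'(1) unfolding inodes_def pnode_def by auto
  obtain us where us: "(g = g' @ us \<and> us @ v = v') \<or> (g @ us = g' \<and> v = us @ v')"
    using gv(2) gv'(2) append_eq_append_conv2 by metis
  show ?thesis
  proof (cases us)
    case Nil then show ?thesis using us gv(1) gv'(1) unfolding inodes_def by auto
  next
    case (Cons c u)
    show ?thesis
    proof (cases "g = g' @ us")
      case True
      then have "g = h @ a # w' @ c # u" using hw'(2) Cons \<open>h = h'\<close> by simp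
      then have "length (seqs G i g) \<ge> length (seqs G i h) + 2"
        using two_between[OF th, of a w' c u] tg(2) hw'(2) \<open>h = h'\<close> by simp
      then show ?thesis using hw(3) by simp
    next
      case False
      then have "g' = h @ a # w @ c # u" using us hw(2) Cons by simp
      then have "length (seqs G i g') \<ge> length (seqs G i h) + 2"
        using two_between[OF th, of a w c u] tg(1) hw(2) by simp
      then show ?thesis using hw'(3) \<open>h = h'\<close> by simp
    qed
  qed
qed

lemma reach_act: assumes "\<rho> \<in> plans_z G i z" "z \<in> below G i I" shows "z \<in> below_act G i I (\<rho> I)"
proof -
  obtain h b w where hbw: "h \<in> inodes G i I" "z = h @ b # w" using below_split[OF assms(2)] by blast
  have "turn G h = Some i" "infoset G h = I" using hbw(1) unfolding inodes_def pnode_def by auto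
  then have "(I, b) \<in> set (seqs G i z)" unfolding seqs_mem_iff using hbw(2) by blast
  then have "\<rho> I = b" using assms(1) unfolding plans_z_def by fastforce
  then show ?thesis using assms(2) hbw unfolding below_def below_act_def by blast
qed

lemma child_plans_I: assumes "wf_efg G" "\<rho> \<in> plans_I G i I" "\<rho> I = a" "J \<in> children G i I a"
  shows "\<rho> \<in> plans_I G i J"
  unfolding plans_I_def
proof (intro CollectI conjI ballI)
  show "\<rho> \<in> plans G i" using assms(2) unfolding plans_I_def by blast
  fix g x assume g: "g \<in> inodes G i J" and x: "x \<in> set (seqs G i g)"
  obtain h w where hw: "h \<in> inodes G i I" "seqs G i g = seqs G i h @ [(I, a)]"
    using child_node[OF assms(1,4) g] by blast
  show "case x of (K, b) \<Rightarrow> \<rho> K = b"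
  proof (cases "x \<in> set (seqs G i h)")
    case True then show ?thesis using assms(2) hw(1) unfolding plans_I_def by fastforce
  next
    case False then show ?thesis using x hw(2) assms(3) by auto
  qed
qed

lemma zplans_seq: assumes "wf_efg G" "\<pi> \<in> plans_z G i z" "z \<in> below_act G i I a" shows "\<pi> \<in> plans_seq G i I a"
proof -
  obtain h w where hw: "h \<in> inodes G i I" "z = h @ a # w" using assms(3) unfolding below_act_def by blast
  have t: "turn G h = Some i" "infoset G h = I" using hw(1) unfolding inodes_def pnode_def by auto
  obtain r where r: "seqs G i (h @ a # w) = seqs G i h @ (infoset G h, a) # r" using seqs_step[OF t(1)] by blast
  have "\<pi> \<in> plans G i" using assms(2) unfolding plans_z_def by blast
  moreover have "\<pi> I = a" using assms(2) r hw(2) t(2) unfolding plans_z_def by auto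
  moreover have "\<forall>h'\<in>inodes G i I. \<forall>(J, b)\<in>set (seqs G i h'). \<pi> J = b"
  proof (intro ballI)
    fix h' x assume h': "h' \<in> inodes G i I" and x: "x \<in> set (seqs G i h')"
    have "x \<in> set (seqs G i z)" using x pr_seqs[OF assms(1) h' hw(1)] r hw(2) by simp
    then show "case x of (J, b) \<Rightarrow> \<pi> J = b" using assms(2) unfolding plans_z_def by fastforce
  qed
  ultimately show ?thesis unfolding plans_seq_def plans_I_def by blast
qed



lemma imm_reach: assumes "wf_efg G" "\<rho> \<in> plans_I G i I" "\<rho> I = a" "z \<in> below_act G i I a"
  "z \<notin> (\<Union>J\<in>children G i I a. below G i J)"
  shows "\<rho> \<in> plans_z G i z"
proof -
  obtain h w where hw: "z \<in> terminals G" "h \<in> inodes G i I" "z = h @ a # w"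
    using assms(4) unfolding below_act_def by blast
  have zh: "z \<in> hists G" using hw(1) unfolding terminals_def by blast
  have th: "turn G h = Some i" "infoset G h = I" using hw(2) unfolding inodes_def pnode_def by auto
  have nomid: "\<forall>k<length w. turn G (h @ a # take k w) \<noteq> Some i"
  proof (rule ccontr)
    assume "\<not> (\<forall>k<length w. turn G (h @ a # take k w) \<noteq> Some i)"
    then have ex: "\<exists>k. k < length w \<and> turn G (h @ a # take k w) = Some i" by blast
    define k0 where "k0 = (LEAST k. k < length w \<and> turn G (h @ a # take k w) = Some i)"
    have k0: "k0 < length w" "turn G (h @ a # take k0 w) = Some i"
      using LeastI_ex[OF ex] unfolding k0_def by auto
    have lt: "\<And>k. k < k0 \<Longrightarrow> turn G (h @ a # take k w) \<noteq> Some i"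
      using not_less_Least k0(1) unfolding k0_def by (metis (mono_tags, lifting) order.strict_trans)
    define g where "g = h @ a # take k0 w"
    have zg: "z = g @ (w ! k0) # drop (Suc k0) w" using hw(3) k0(1) unfolding g_def
      by (simp add: id_take_nth_drop[symmetric])
    have pg: "pnode G i g" using pnode_prefix[OF assms(1), of g "w ! k0" "drop (Suc k0) w" i] zg zh k0(2)
      unfolding g_def by simp
    have "infoset G g \<in> children G i I a"
      unfolding children_def
    proof (intro CollectI bexI exI conjI allI impI)
      show "h \<in> inodes G i I" by (rule hw(2))
      show "pnode G i (h @ a # take k0 w)" using pg unfolding g_def .
      show "infoset G (h @ a # take k0 w) = infoset G g" unfolding g_def ..
      fix k assume "k < length (take k0 w)"
      then have "k < k0" by simp
      then show "\<not> pnode G i (h @ a # take k (take k0 w))" using lt[of k] unfolding pnode_def by simp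
    qed
    moreover have "z \<in> below G i (infoset G g)"
      using hw(1) zg pg unfolding below_def inodes_def by blast
    ultimately show False using assms(5) by blast
  qed
  have "\<forall>(K, b)\<in>set (seqs G i z). \<rho> K = b"
  proof (intro ballI)
    fix x assume x: "x \<in> set (seqs G i z)"
    obtain K b where x': "x = (K, b)" by fastforce
    obtain p v where pv: "z = p @ b # v" "turn G p = Some i" "infoset G p = K"
      using x unfolding x' seqs_mem_iff by blast
    obtain us where us: "(h = p @ us \<and> us @ a # w = b # v) \<or> (h @ us = p \<and> a # w = us @ b # v)"
      using hw(3) pv(1) append_eq_append_conv2 by metis
    have "\<rho> K = b"
    proof (cases us)
      case Nil
      then have "p = h" "b = a" using us by auto
      then show ?thesis using pv(3) th(2) assms(3) by simp
    next
      case (Cons c u)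
      show ?thesis
      proof (cases "h = p @ us")
        case True
        then have "c = b" "h = p @ b # u" using us Cons by auto
        then have "(K, b) \<in> set (seqs G i h)" unfolding seqs_mem_iff using pv by blast
        then show ?thesis using assms(2) hw(2) unfolding plans_I_def by fastforce
      next
        case False
        then have "p = h @ c # u" "a # w = c # u @ b # v" using us Cons by auto
        then have "p = h @ a # take (length u) w" "length u < length w" by auto
        then show ?thesis using nomid pv(2) by blast
      qed
    qed
    then show "case x of (K, b) \<Rightarrow> \<rho> K = b" using x' by simp
  qed
  moreover have "\<rho> \<in> plans G i" using assms(2) unfolding plans_I_def by blast
  ultimately show ?thesis unfolding plans_z_def by blast
qed

definition Sv :: "('p,'a,'i) efg \<Rightarrow> 'p \<Rightarrow> ('p \<Rightarrow> 'i \<Rightarrow> 'a) \<Rightarrow> ('i \<Rightarrow> 'a) \<Rightarrow> 'i \<Rightarrow> real" where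
  "Sv G i \<pi> \<rho> I = (\<Sum>z\<in>below G i I. if others_reach G i \<pi> z \<and> \<rho> \<in> plans_z G i z then pc G z * util G i z else 0)"

lemma infoset_node: "I \<in> infosets G i \<Longrightarrow> \<exists>h. h \<in> inodes G i I"
  unfolding infosets_def inodes_def by blast

lemma Vf_eq: assumes "wf_efg G"
  shows "\<forall>I \<rho>. I \<in> infosets G i \<longrightarrow> \<rho> \<in> plans_I G i I \<longrightarrow> (\<forall>h\<in>inodes G i I. card (hists G) < n + length h)
     \<longrightarrow> Vf n G i \<pi> \<rho> I = Sv G i \<pi> \<rho> I"
proof (induction n)
  case 0
  show ?case
  proof (intro allI impI)
    fix I \<rho> assume I: "I \<in> infosets G i" and c: "\<forall>h\<in>inodes G i I. card (hists G) < 0 + length h"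
    obtain h where h: "h \<in> inodes G i I" using infoset_node[OF I] by blast
    have "h \<in> hists G" using h unfolding inodes_def pnode_def by blast
    then show "Vf 0 G i \<pi> \<rho> I = Sv G i \<pi> \<rho> I" using len_lt_card[OF assms] c h by fastforce
  qed
next
  case (Suc n)
  show ?case
  proof (intro allI impI)
    fix I \<rho> assume I: "I \<in> infosets G i" and rho: "\<rho> \<in> plans_I G i I"
      and c: "\<forall>h\<in>inodes G i I. card (hists G) < Suc n + length h"
    define a where "a = \<rho> I"
    define f where "f z = (if others_reach G i \<pi> z \<and> \<rho> \<in> plans_z G i z then pc G z * util G i z else 0)" for z
    define C where "C = children G i I a"
    define U where "U = (\<Union>J\<in>C. below G i J)"
    have finC: "finite C" unfolding C_def by (rule fin_children[OF assms])
    have IH: "Vf n G i \<pi> \<rho> J = Sv G i \<pi> \<rho> J" if J: "J \<in> C" for J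
    proof -
      have "J \<in> infosets G i" using J child_infoset[of J G i I a] unfolding C_def by simp
      moreover have "\<rho> \<in> plans_I G i J" using child_plans_I[OF assms rho a_def[symmetric]] J unfolding C_def by blast
      moreover have "\<forall>g\<in>inodes G i J. card (hists G) < n + length g"
      proof
        fix g assume g: "g \<in> inodes G i J"
        obtain h w where "h \<in> inodes G i I" "g = h @ a # w" using child_node[OF assms _ g] J unfolding C_def by blast
        then show "card (hists G) < n + length g" using c by fastforce
      qed
      ultimately show ?thesis using Suc.IH by blast
    qed
    have s1: "Sv G i \<pi> \<rho> I = sum f (below_act G i I a)"
      unfolding Sv_def f_def[symmetric]
    proof (rule sum.mono_neutral_right)
      show "finite (below G i I)" by (rule fin_below[OF assms])
      show "below_act G i I a \<subseteq> below G i I" unfolding below_act_def below_def by blast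
      show "\<forall>z\<in>below G i I - below_act G i I a. f z = 0"
        using reach_act unfolding f_def a_def by fastforce
    qed
    have Usub: "U \<subseteq> below_act G i I a" unfolding U_def C_def using below_child_sub[OF assms] by blast
    have s2: "sum f (below_act G i I a) = sum f (below_act G i I a - U) + sum f U"
      by (rule sum.subset_diff[OF Usub fin_below_act[OF assms]])
    have s3: "sum f U = (\<Sum>J\<in>C. sum f (below G i J))"
      unfolding U_def
    proof (rule sum.UNION_disjoint[OF finC])
      show "\<forall>J\<in>C. finite (below G i J)" using fin_below[OF assms] by blast
      show "\<forall>J\<in>C. \<forall>J'\<in>C. J \<noteq> J' \<longrightarrow> below G i J \<inter> below G i J' = {}"
        using child_disj[OF assms] unfolding C_def by blast
    qed
    have s4: "sum f (below_act G i I a - U) = imm G i \<pi> I a"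
      unfolding imm_def U_def[symmetric] C_def[symmetric]
    proof (rule sum.cong[OF refl])
      fix z assume z: "z \<in> below_act G i I a - U"
      have "\<rho> \<in> plans_z G i z" using imm_reach[OF assms rho a_def[symmetric]] z unfolding U_def C_def by blast
      then show "f z = (if others_reach G i \<pi> z then pc G z * util G i z else 0)" unfolding f_def by simp
    qed
    have "Vf (Suc n) G i \<pi> \<rho> I = imm G i \<pi> I a + (\<Sum>J\<in>C. Vf n G i \<pi> \<rho> J)"
      unfolding a_def C_def by simp
    also have "\<dots> = imm G i \<pi> I a + (\<Sum>J\<in>C. Sv G i \<pi> \<rho> J)" using IH by simp
    also have "\<dots> = Sv G i \<pi> \<rho> I"
      using s1 s2 s3 s4 unfolding Sv_def f_def by simp
    finally show "Vf (Suc n) G i \<pi> \<rho> I = Sv G i \<pi> \<rho> I" .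
  qed
qed

lemma V_eq: assumes "wf_efg G" "I \<in> infosets G i" "\<rho> \<in> plans_I G i I"
  shows "V G i \<pi> \<rho> I = Sv G i \<pi> \<rho> I"
  unfolding V_def using Vf_eq[OF assms(1), of i "card (hists G) + 1" \<pi>] assms(2,3) by auto



lemma plans_I_ne: assumes "wf_efg G" "I \<in> infosets G i" shows "plans_I G i I \<noteq> {}"
proof -
  obtain h0 where h0: "h0 \<in> inodes G i I" using infoset_node[OF assms(2)] by blast
  have h0h: "h0 \<in> hists G" using h0 unfolding inodes_def pnode_def by blast
  define \<rho> where "\<rho> J = (if J \<in> infosets G i then (if \<exists>b. (J, b) \<in> set (seqs G i h0)
      then (SOME b. (J, b) \<in> set (seqs G i h0)) else (SOME b. b \<in> iacts G i J)) else undefined)" for J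
  have inI: "b \<in> iacts G i J" if jb: "(J, b) \<in> set (seqs G i h0)" for J b
  proof -
    obtain p w where pw: "h0 = p @ b # w" "p \<in> inodes G i J" using seqs_to_node[OF assms(1) jb h0h] by blast
    have "(p @ [b]) @ w \<in> hists G" using pw h0h by simp
    then have "b \<in> acts G p" using hists_prefix[OF assms(1)] unfolding acts_def by blast
    then show ?thesis using pw(2) unfolding iacts_def by blast
  qed
  have inS: "J \<in> infosets G i" if jb: "(J, b) \<in> set (seqs G i h0)" for J b
  proof -
    obtain p w where pw: "h0 = p @ b # w" "p \<in> inodes G i J" using seqs_to_node[OF assms(1) jb h0h] by blast
    then show ?thesis unfolding inodes_def infosets_def by blast
  qed
  have uniq: "b = b'" if jb: "(J, b) \<in> set (seqs G i h0)" and jb': "(J, b') \<in> set (seqs G i h0)" for J b b'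
  proof -
    obtain p w where pw: "h0 = p @ b # w" "p \<in> inodes G i J" using seqs_to_node[OF assms(1) jb h0h] by blast
    obtain p' w' where pw': "h0 = p' @ b' # w'" "p' \<in> inodes G i J" using seqs_to_node[OF assms(1) jb' h0h] by blast
    have "p = p'" using same_node[OF assms(1) pw(2) pw'(2), of "b # w" "b' # w'"] pw pw' by simp
    then show ?thesis using pw pw' by simp
  qed
  have "\<rho> \<in> plans G i"
    unfolding plans_def PiE_iff
  proof (intro conjI ballI)
    fix J assume J: "J \<in> infosets G i"
    show "\<rho> J \<in> iacts G i J"
    proof (cases "\<exists>b. (J, b) \<in> set (seqs G i h0)")
      case True
      then have "(J, \<rho> J) \<in> set (seqs G i h0)" unfolding \<rho>_def using J someI_ex[OF True] by simp
      then show ?thesis by (rule inI)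
    next
      case False
      obtain h where h: "h \<in> inodes G i J" using infoset_node[OF J] by blast
      then have "iacts G i J \<noteq> {}" unfolding iacts_def inodes_def pnode_def by blast
      then have "\<exists>b. b \<in> iacts G i J" by blast
      then show ?thesis unfolding \<rho>_def using J False someI_ex[of "\<lambda>b. b \<in> iacts G i J"] by simp
    qed
  next
    show "\<rho> \<in> extensional (infosets G i)" unfolding \<rho>_def extensional_def by simp
  qed
  moreover have "\<forall>h\<in>inodes G i I. \<forall>(J, b)\<in>set (seqs G i h). \<rho> J = b"
  proof (intro ballI)
    fix h x assume h: "h \<in> inodes G i I" and x: "x \<in> set (seqs G i h)"
    obtain J b where x': "x = (J, b)" by fastforce
    have jb: "(J, b) \<in> set (seqs G i h0)" using x x' pr_seqs[OF assms(1) h h0] by simp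
    then have "(J, \<rho> J) \<in> set (seqs G i h0)" unfolding \<rho>_def using inS[OF jb] by (auto intro: someI_ex)
    then have "\<rho> J = b" using uniq jb by blast
    then show "case x of (J, b) \<Rightarrow> \<rho> J = b" using x' by simp
  qed
  ultimately show ?thesis unfolding plans_I_def by blast
qed

lemma card_sum_if: "finite A \<Longrightarrow> real (card {t \<in> A. P t}) = (\<Sum>t\<in>A. if P t then 1 else 0)"
  by (simp add: sum.inter_filter[symmetric])

lemma mubar_sum: assumes "finite P" "\<forall>t\<in>{1..T}. pis t \<in> P"
  shows "(\<Sum>\<pi>\<in>{\<pi> \<in> P. Q \<pi>}. mubar T pis \<pi>) = (\<Sum>t\<in>{1..T}. if Q (pis t) then 1 else 0) / real T"
proof -
  have "(\<Sum>\<pi>\<in>{\<pi> \<in> P. Q \<pi>}. mubar T pis \<pi>) = (\<Sum>\<pi>\<in>{\<pi> \<in> P. Q \<pi>}. \<Sum>t\<in>{1..T}. if pis t = \<pi> then 1 else 0) / real T"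
  proof -
    have "real (card {t \<in> {1..T}. pis t = \<pi>}) = (\<Sum>t\<in>{1..T}. if pis t = \<pi> then 1 else 0)" for \<pi>
      by (rule card_sum_if) simp
    then show ?thesis unfolding mubar_def by (simp add: sum_divide_distrib)
  qed
  also have "(\<Sum>\<pi>\<in>{\<pi> \<in> P. Q \<pi>}. \<Sum>t\<in>{1..T}. if pis t = \<pi> then 1 else (0::real))
      = (\<Sum>t\<in>{1..T}. \<Sum>\<pi>\<in>{\<pi> \<in> P. Q \<pi>}. if pis t = \<pi> then 1 else 0)"
    by (rule sum.swap)
  also have "\<dots> = (\<Sum>t\<in>{1..T}. if Q (pis t) then 1 else 0)"
  proof (rule sum.cong[OF refl])
    fix t assume t: "t \<in> {1..T}"
    have "(\<Sum>\<pi>\<in>{\<pi> \<in> P. Q \<pi>}. if pis t = \<pi> then 1 else (0::real)) = (if pis t \<in> {\<pi> \<in> P. Q \<pi>} then 1 else 0)"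
      using assms(1) by (simp add: sum.delta)
    then show "(\<Sum>\<pi>\<in>{\<pi> \<in> P. Q \<pi>}. if pis t = \<pi> then 1 else (0::real)) = (if Q (pis t) then 1 else 0)"
      using assms(2) t by simp
  qed
  finally show ?thesis .
qed

lemma sup_lin: assumes "finite S" "S \<noteq> {}"
  shows "Sup {(\<Sum>x\<in>S. m x * F x) | m. dist_on S m} = Max (F ` S)"
    and "dist_on S m \<Longrightarrow> (\<Sum>x\<in>S. m x * F x) \<le> Max (F ` S)"
proof -
  have le: "(\<Sum>x\<in>S. m x * F x) \<le> Max (F ` S)" if d: "dist_on S m" for m :: "_ \<Rightarrow> real"
  proof -
    have "(\<Sum>x\<in>S. m x * F x) \<le> (\<Sum>x\<in>S. m x * Max (F ` S))"
      using d assms by (intro sum_mono mult_left_mono) (auto simp: dist_on_def)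
    also have "\<dots> = Max (F ` S)" using d by (simp add: sum_distrib_right[symmetric] dist_on_def)
    finally show ?thesis .
  qed
  then show "dist_on S m \<Longrightarrow> (\<Sum>x\<in>S. m x * F x) \<le> Max (F ` S)" .
  have "Max (F ` S) \<in> F ` S" using assms by (intro Max_in) auto
  then obtain x0 where x0: "x0 \<in> S" "F x0 = Max (F ` S)" by force
  define m0 where "m0 x = (if x = x0 then 1 else (0::real))" for x
  have "dist_on S m0" unfolding dist_on_def m0_def using x0 assms by (simp add: sum.delta')
  moreover have "(\<Sum>x\<in>S. m0 x * F x) = (\<Sum>x\<in>S. if x = x0 then F x else 0)" by (rule sum.cong) (auto simp: m0_def)
  moreover have "(\<Sum>x\<in>S. if x = x0 then F x else 0) = Max (F ` S)" using x0 assms by (simp add: sum.delta')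
  ultimately have mem: "Max (F ` S) \<in> {(\<Sum>x\<in>S. m x * F x) | m. dist_on S m}" by force
  show "Sup {(\<Sum>x\<in>S. m x * F x) | m. dist_on S m} = Max (F ` S)"
    by (rule cSup_eq_maximum[OF mem]) (use le in blast)
qed



lemma sum_pz: assumes "wf_efg G" "dist_on (plans_I G i I) \<mu>h"
  shows "(\<Sum>\<rho>\<in>plans_z G i z. \<mu>h \<rho>) = (\<Sum>\<rho>\<in>plans_I G i I. \<mu>h \<rho> * (if \<rho> \<in> plans_z G i z then 1 else 0))"
proof -
  have fin: "finite (plans G i)" by (rule fin_plans[OF assms(1)])
  have sub: "plans_I G i I \<subseteq> plans G i" unfolding plans_I_def by blast
  have "(\<Sum>\<rho>\<in>plans_z G i z. \<mu>h \<rho>) = (\<Sum>\<rho>\<in>plans G i. if \<rho> \<in> plans_z G i z then \<mu>h \<rho> else 0)"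
    unfolding plans_z_def using fin by (simp add: sum.inter_filter)
  also have "\<dots> = (\<Sum>\<rho>\<in>plans_I G i I. if \<rho> \<in> plans_z G i z then \<mu>h \<rho> else 0)"
    using assms(2) sub fin by (intro sum.mono_neutral_right) (auto simp: dist_on_def)
  also have "\<dots> = (\<Sum>\<rho>\<in>plans_I G i I. \<mu>h \<rho> * (if \<rho> \<in> plans_z G i z then 1 else 0))"
    by (rule sum.cong) auto
  finally show ?thesis .
qed

lemma triple_main:
  fixes G :: "('p, 'a, 'i) efg" and pis :: "nat \<Rightarrow> 'p \<Rightarrow> 'i \<Rightarrow> 'a" and T :: nat
  assumes wf: "wf_efg G" and T: "T > 0" and pis: "\<forall>t\<in>{1..T}. pis t \<in> jplans G"
    and tr: "(i, I, a) \<in> seqset G"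
  shows "dev G (mubar T pis) i I a = trig_regret G i I a T pis / real T"
    and "dist_on (plans_I G i I) \<mu>h \<Longrightarrow>
       (\<Sum>z\<in>below G i I. p_dev G i I a (mubar T pis) \<mu>h z * util G i z)
       \<le> (\<Sum>z\<in>below_act G i I a. q G (mubar T pis) z * util G i z) + trig_regret G i I a T pis / real T"
proof -
  have ip: "i \<in> players G" and II: "I \<in> infosets G i" using tr unfolding seqset_def by auto
  define \<mu> where "\<mu> = mubar T pis"
  define PI where "PI = plans_I G i I"
  define ps where "ps t = (pis t i \<in> plans_seq G i I a)" for t
  define F where "F \<rho> = (\<Sum>t\<in>{1..T}. if ps t then Sv G i (pis t) \<rho> I else 0) / real T" for \<rho>
  define Q where "Q = (\<Sum>z\<in>below_act G i I a. q G \<mu> z * util G i z)"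
  define R where "R = (\<lambda>\<rho>. \<Sum>t\<in>{1..T}. if pis t i \<in> plans_seq G i I a
                             then V G i (pis t) \<rho> I - V G i (pis t) (pis t i) I else 0)"
  have finPI: "finite PI" unfolding PI_def
    by (rule finite_subset[OF _ fin_plans[OF wf]]) (auto simp: plans_I_def)
  have nePI: "PI \<noteq> {}" unfolding PI_def by (rule plans_I_ne[OF wf II])
  have finP: "finite (jplans G)" by (rule fin_jplans[OF wf])
  define g where "g t z \<rho> = (if ps t \<and> others_reach G i (pis t) z \<and> \<rho> \<in> plans_z G i z then pc G z * util G i z else 0)" for t z \<rho>
  have A: "(\<Sum>z\<in>below G i I. p_dev G i I a \<mu> \<mu>h z * util G i z) = (\<Sum>\<rho>\<in>PI. \<mu>h \<rho> * F \<rho>)"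
    if d: "dist_on PI \<mu>h" for \<mu>h
  proof -
    have pt: "p_dev G i I a \<mu> \<mu>h z * util G i z = (\<Sum>\<rho>\<in>PI. \<mu>h \<rho> * (\<Sum>t\<in>{1..T}. g t z \<rho>)) / real T" for z
    proof -
      have Az: "(\<Sum>\<pi>\<in>{\<pi> \<in> jplans G. \<pi> i \<in> plans_seq G i I a \<and> others_reach G i \<pi> z}. \<mu> \<pi>)
          = (\<Sum>t\<in>{1..T}. if ps t \<and> others_reach G i (pis t) z then 1 else 0) / real T"
        unfolding \<mu>_def ps_def by (rule mubar_sum[OF finP pis])
      have Bz: "(\<Sum>\<rho>\<in>plans_z G i z. \<mu>h \<rho>) = (\<Sum>\<rho>\<in>PI. \<mu>h \<rho> * (if \<rho> \<in> plans_z G i z then 1 else 0))"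
        using sum_pz[OF wf d[unfolded PI_def]] unfolding PI_def .
      have gz: "(\<Sum>t\<in>{1..T}. g t z \<rho>) = (if \<rho> \<in> plans_z G i z then 1 else 0) *
           ((\<Sum>t\<in>{1..T}. if ps t \<and> others_reach G i (pis t) z then 1 else 0) * pc G z * util G i z)" for \<rho>
        unfolding g_def by (auto simp: sum_distrib_right intro!: sum.cong)
      show ?thesis unfolding p_dev_def Az Bz gz
        by (simp add: sum_distrib_right sum_distrib_left sum_divide_distrib mult_ac) (rule sum.swap)
    qed
    have "(\<Sum>z\<in>below G i I. p_dev G i I a \<mu> \<mu>h z * util G i z)
        = (\<Sum>z\<in>below G i I. \<Sum>\<rho>\<in>PI. \<mu>h \<rho> * (\<Sum>t\<in>{1..T}. g t z \<rho>) / real T)"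
      unfolding pt by (simp add: sum_divide_distrib)
    also have "\<dots> = (\<Sum>\<rho>\<in>PI. \<Sum>z\<in>below G i I. \<mu>h \<rho> * (\<Sum>t\<in>{1..T}. g t z \<rho>) / real T)"
      by (rule sum.swap)
    also have "\<dots> = (\<Sum>\<rho>\<in>PI. \<mu>h \<rho> * ((\<Sum>t\<in>{1..T}. \<Sum>z\<in>below G i I. g t z \<rho>) / real T))"
      by (simp add: sum_distrib_left sum_divide_distrib) (rule sum.cong[OF refl], rule sum.swap)
    also have "\<dots> = (\<Sum>\<rho>\<in>PI. \<mu>h \<rho> * F \<rho>)"
    proof -
      have "(\<Sum>z\<in>below G i I. g t z \<rho>) = (if ps t then Sv G i (pis t) \<rho> I else 0)" for t \<rho>
        unfolding g_def Sv_def by auto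
      then show ?thesis unfolding F_def by simp
    qed
    finally show ?thesis .
  qed
  have B: "Q = (\<Sum>t\<in>{1..T}. if ps t then Sv G i (pis t) (pis t i) I else 0) / real T"
  proof -
    have qz: "q G \<mu> z = (\<Sum>t\<in>{1..T}. if pis t \<in> jplans_z G z then 1 else 0) / real T * pc G z" for z
    proof -
      have "(\<Sum>\<pi>\<in>jplans_z G z. \<mu> \<pi>) = (\<Sum>t\<in>{1..T}. if (\<forall>j\<in>players G. pis t j \<in> plans_z G j z) then 1 else 0) / real T"
        unfolding \<mu>_def jplans_z_def by (rule mubar_sum[OF finP pis])
      moreover have "(\<forall>j\<in>players G. pis t j \<in> plans_z G j z) \<longleftrightarrow> pis t \<in> jplans_z G z" if "t \<in> {1..T}" for t
        using pis that unfolding jplans_z_def by auto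
      ultimately show ?thesis unfolding q_def by simp
    qed
    have per: "(\<Sum>z\<in>below_act G i I a. if pis t \<in> jplans_z G z then pc G z * util G i z else 0)
        = (if ps t then Sv G i (pis t) (pis t i) I else 0)" if t: "t \<in> {1..T}" for t
    proof (cases "ps t")
      case True
      then have pt: "pis t i \<in> plans_seq G i I a" unfolding ps_def .
      then have ptI: "pis t i I = a" unfolding plans_seq_def by blast
      have "Sv G i (pis t) (pis t i) I = (\<Sum>z\<in>below_act G i I a.
            if others_reach G i (pis t) z \<and> pis t i \<in> plans_z G i z then pc G z * util G i z else 0)"
        unfolding Sv_def
      proof (rule sum.mono_neutral_right)
        show "finite (below G i I)" by (rule fin_below[OF wf])
        show "below_act G i I a \<subseteq> below G i I" unfolding below_act_def below_def by blast
        show "\<forall>z\<in>below G i I - below_act G i I a. (if others_reach G i (pis t) z \<and> pis t i \<in> plans_z G i z then pc G z * util G i z else 0) = 0"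
          using reach_act[of "pis t i" G i _ I] ptI by auto
      qed
      moreover have "pis t \<in> jplans_z G z \<longleftrightarrow> others_reach G i (pis t) z \<and> pis t i \<in> plans_z G i z" for z
        using pis t ip unfolding jplans_z_def others_reach_def by auto
      ultimately show ?thesis using True by simp
    next
      case False
      have "pis t \<notin> jplans_z G z" if z: "z \<in> below_act G i I a" for z
      proof
        assume "pis t \<in> jplans_z G z"
        then have "pis t i \<in> plans_z G i z" using ip unfolding jplans_z_def by blast
        then have "pis t i \<in> plans_seq G i I a" using zplans_seq[OF wf _ z] by blast
        then show False using False unfolding ps_def by blast
      qed
      then show ?thesis using False by simp
    qed
    have "Q = (\<Sum>z\<in>below_act G i I a. (\<Sum>t\<in>{1..T}. if pis t \<in> jplans_z G z then pc G z * util G i z else 0) / real T)"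
      unfolding Q_def qz by (intro sum.cong refl) (auto simp: sum_distrib_right sum_divide_distrib intro!: sum.cong)
    also have "\<dots> = (\<Sum>t\<in>{1..T}. \<Sum>z\<in>below_act G i I a. if pis t \<in> jplans_z G z then pc G z * util G i z else 0) / real T"
      by (simp add: sum_divide_distrib[symmetric]) (rule disjI2, rule sum.swap)
    also have "\<dots> = (\<Sum>t\<in>{1..T}. if ps t then Sv G i (pis t) (pis t i) I else 0) / real T"
      using per by simp
    finally show ?thesis .
  qed
  have C: "F \<rho> = R \<rho> / real T + Q" if r: "\<rho> \<in> PI" for \<rho>
  proof -
    have "R \<rho> = (\<Sum>t\<in>{1..T}. (if ps t then Sv G i (pis t) \<rho> I else 0) - (if ps t then Sv G i (pis t) (pis t i) I else 0))"
      unfolding R_def ps_def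
    proof (rule sum.cong[OF refl])
      fix t assume t: "t \<in> {1..T}"
      show "(if pis t i \<in> plans_seq G i I a then V G i (pis t) \<rho> I - V G i (pis t) (pis t i) I else 0)
         = (if pis t i \<in> plans_seq G i I a then Sv G i (pis t) \<rho> I else 0)
           - (if pis t i \<in> plans_seq G i I a then Sv G i (pis t) (pis t i) I else 0)"
      proof (cases "pis t i \<in> plans_seq G i I a")
        case True
        then have "pis t i \<in> plans_I G i I" unfolding plans_seq_def by blast
        then show ?thesis using True V_eq[OF wf II] r unfolding PI_def by simp
      qed simp
    qed
    also have "\<dots> = real T * F \<rho> - real T * Q" unfolding F_def B using T by (simp add: sum_subtractf)
    finally show ?thesis using T by (simp add: field_simps)
  qed
  have trig: "trig_regret G i I a T pis = Max (R ` PI)" unfolding trig_regret_def R_def PI_def ..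
  have MaxF: "Max (F ` PI) = trig_regret G i I a T pis / real T + Q"
  proof -
    have "F ` PI = (\<lambda>x. x / real T + Q) ` (R ` PI)" using C by (auto simp: image_image)
    moreover have "mono (\<lambda>x. x / real T + Q)" using T by (intro monoI) (simp add: divide_right_mono)
    ultimately show ?thesis using mono_Max_commute[of "\<lambda>x. x / real T + Q" "R ` PI"] finPI nePI trig by simp
  qed
  have setEq: "{(\<Sum>z\<in>below G i I. p_dev G i I a \<mu> \<mu>h z * util G i z) | \<mu>h. dist_on (plans_I G i I) \<mu>h}
      = {(\<Sum>\<rho>\<in>PI. m \<rho> * F \<rho>) | m. dist_on PI m}"
    using A unfolding PI_def by metis
  show "dev G (mubar T pis) i I a = trig_regret G i I a T pis / real T"
    unfolding dev_def \<mu>_def[symmetric] setEq Q_def[symmetric] sup_lin(1)[OF finPI nePI] MaxF by simp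
  show "dist_on (plans_I G i I) \<mu>h \<Longrightarrow>
       (\<Sum>z\<in>below G i I. p_dev G i I a (mubar T pis) \<mu>h z * util G i z)
       \<le> (\<Sum>z\<in>below_act G i I a. q G (mubar T pis) z * util G i z) + trig_regret G i I a T pis / real T"
    unfolding \<mu>_def[symmetric] Q_def[symmetric]
    using A[of \<mu>h] sup_lin(2)[OF finPI nePI, of \<mu>h F] MaxF unfolding PI_def by simp
qed


theorem theorem1:
  fixes G :: "('p, 'a, 'i) efg" and pis :: "nat \<Rightarrow> 'p \<Rightarrow> 'i \<Rightarrow> 'a" and T :: nat
  assumes "wf_efg G"
    and "T > 0"
    and "\<forall>t\<in>{1..T}. pis t \<in> jplans G"
  shows "delta G (mubar T pis)
           = Max ((\<lambda>(i, I, a). trig_regret G i I a T pis / real T) ` seqset G)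
       \<and> efce_eps G (mubar T pis)
           (Max ((\<lambda>(i, I, a). trig_regret G i I a T pis / real T) ` seqset G))
       \<and> (\<forall>(i, I, a)\<in>seqset G. \<forall>\<mu>h. dist_on (plans_I G i I) \<mu>h \<longrightarrow>
            (\<Sum>z\<in>below_act G i I a. q G (mubar T pis) z * util G i z)
            \<ge> (\<Sum>z\<in>below G i I. p_dev G i I a (mubar T pis) \<mu>h z * util G i z)
              - Max ((\<lambda>(i, I, a). trig_regret G i I a T pis / real T) ` seqset G))"
proof -
  let ?M = "Max ((\<lambda>(i, I, a). trig_regret G i I a T pis / real T) ` seqset G)"
  have eq: "(\<lambda>(i, I, a). dev G (mubar T pis) i I a) ` seqset G
          = (\<lambda>(i, I, a). trig_regret G i I a T pis / real T) ` seqset G"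
    using triple_main(1)[OF assms] by (intro image_cong refl) auto
  have d: "delta G (mubar T pis) = ?M" unfolding delta_def eq ..
  moreover have "efce_eps G (mubar T pis) ?M" unfolding efce_eps_def d by simp
  moreover have "\<forall>(i, I, a)\<in>seqset G. \<forall>\<mu>h. dist_on (plans_I G i I) \<mu>h \<longrightarrow>
            (\<Sum>z\<in>below_act G i I a. q G (mubar T pis) z * util G i z)
            \<ge> (\<Sum>z\<in>below G i I. p_dev G i I a (mubar T pis) \<mu>h z * util G i z) - ?M"
  proof (intro ballI)
    fix x assume x: "x \<in> seqset G"
    obtain i I a where xe: "x = (i, I, a)" by (cases x) auto
    have tr: "(i, I, a) \<in> seqset G" using x xe by simp
    have le1: "trig_regret G i I a T pis / real T \<le> ?M"
      using tr fin_seqset[OF assms(1)] by (intro Max_ge) force+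
    have "\<forall>\<mu>h. dist_on (plans_I G i I) \<mu>h \<longrightarrow>
            (\<Sum>z\<in>below_act G i I a. q G (mubar T pis) z * util G i z)
            \<ge> (\<Sum>z\<in>below G i I. p_dev G i I a (mubar T pis) \<mu>h z * util G i z) - ?M"
    proof (intro allI impI)
      fix \<mu>h assume dh: "dist_on (plans_I G i I) \<mu>h"
      have "(\<Sum>z\<in>below G i I. p_dev G i I a (mubar T pis) \<mu>h z * util G i z)
         \<le> (\<Sum>z\<in>below_act G i I a. q G (mubar T pis) z * util G i z) + trig_regret G i I a T pis / real T"
        by (rule triple_main(2)[OF assms tr dh])
      then show "(\<Sum>z\<in>below_act G i I a. q G (mubar T pis) z * util G i z)
            \<ge> (\<Sum>z\<in>below G i I. p_dev G i I a (mubar T pis) \<mu>h z * util G i z) - ?M"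
        using le1 by linarith
    qed
    then show "case x of (i, I, a) \<Rightarrow> \<forall>\<mu>h. dist_on (plans_I G i I) \<mu>h \<longrightarrow>
            (\<Sum>z\<in>below_act G i I a. q G (mubar T pis) z * util G i z)
            \<ge> (\<Sum>z\<in>below G i I. p_dev G i I a (mubar T pis) \<mu>h z * util G i z) - ?M"
      using xe by simp
  qed
  ultimately show ?thesis by blast
qed

end
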